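(* If a spanned map $(M,S)$ is a covered map, then the dual spanned map $(M^*,\bar S)$ is also a covered map, and $$g(M)=g(M_{|S})+g(M^*_{|\bar S}).$$
   Context: Permutations compose right to left. A map is $M=(H,\sigma,\alpha)$ with $H$ finite, $\alpha$ a fixed-point-free involution, $\sigma$ a permutation, $\langle\sigma,\alpha\rangle$ transitive, and a root $r\in H$. Vertices, edges, faces are the cycles of $\sigma,\alpha,\phi=\sigma\alpha$; the genus $g$ satisfies $v-e+f=2-2g$. For a permutation $\pi$ and $S\subseteq H$, $\pi_{|S}$ is obtained from the cycles of $\pi$ by erasing elements not in $S$. A spanned map is $(M,S)$ with $S$ stable by $\alpha$, and $M_{|S}=(S,\sigma_{|S},\alpha_{|S})$. The dual of $M$ is $M^*=(H,\phi,\alpha)$ with the same root, and the dual of $(M,S)$ is $(M^*,\bar S)$ with $\bar S=H\setminus S$, so $M^*_{|\bar S}=(\bar S,\phi_{|\bar S},\alpha_{|\bar S})$. A covered map is a spanned map such that $M_{|S}$ is a connecting unicellular map: $\sigma_{|S},\alpha_{|S}$ transitive on $S$, $S$ meets every cycle of $\sigma$ (except $S=\emptyset$ is allowed when $\sigma$ has one cycle; the empty map counts as a unicellular map of genus $0$), and $\sigma_{|S}\alpha_{|S}$ is cyclic. *)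

theory Defs
  imports Main "HOL-Library.FuncSet"
begin

definition perm_on :: "('a \<Rightarrow> 'a) \<Rightarrow> 'a set \<Rightarrow> bool" where
  "perm_on \<pi> H \<longleftrightarrow> bij_betw \<pi> H H \<and> (\<forall>x. x \<notin> H \<longrightarrow> \<pi> x = x)"

text \<open>Restriction \<open>\<pi>_{|S}\<close>: erase from the cycles of \<pi> the elements not in S,
  i.e. send x in S to the first element of S after x on its \<pi>-cycle.\<close>
definition restr :: "('a \<Rightarrow> 'a) \<Rightarrow> 'a set \<Rightarrow> 'a \<Rightarrow> 'a" where
  "restr \<pi> S x = (if x \<in> S then (\<pi> ^^ (LEAST n. 0 < n \<and> (\<pi> ^^ n) x \<in> S)) x else x)"

definition cyc :: "('a \<Rightarrow> 'a) \<Rightarrow> 'a \<Rightarrow> 'a set" where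
  "cyc \<pi> x = {(\<pi> ^^ n) x | n. True}"

definition ncycles :: "('a \<Rightarrow> 'a) \<Rightarrow> 'a set \<Rightarrow> nat" where
  "ncycles \<pi> A = card (cyc \<pi> ` A)"

definition transitive_on :: "'a set \<Rightarrow> ('a \<Rightarrow> 'a) \<Rightarrow> ('a \<Rightarrow> 'a) \<Rightarrow> bool" where
  "transitive_on H \<sigma> \<alpha> \<longleftrightarrow>
     (\<forall>x\<in>H. \<forall>y\<in>H. (x, y) \<in> ({(z, \<sigma> z) | z. z \<in> H} \<union> {(z, \<alpha> z) | z. z \<in> H})\<^sup>*)"

definition is_map :: "'a set \<Rightarrow> ('a \<Rightarrow> 'a) \<Rightarrow> ('a \<Rightarrow> 'a) \<Rightarrow> bool" where
  "is_map H \<sigma> \<alpha> \<longleftrightarrow> finite H \<and> perm_on \<sigma> H \<and> perm_on \<alpha> H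
     \<and> (\<forall>x\<in>H. \<alpha> (\<alpha> x) = x \<and> \<alpha> x \<noteq> x) \<and> transitive_on H \<sigma> \<alpha>"

text \<open>Genus: v - e + f = 2 - 2g; the empty map has genus 0.\<close>
definition genus :: "'a set \<Rightarrow> ('a \<Rightarrow> 'a) \<Rightarrow> ('a \<Rightarrow> 'a) \<Rightarrow> int" where
  "genus H \<sigma> \<alpha> = (if H = {} then 0 else
     (2 - int (ncycles \<sigma> H) + int (ncycles \<alpha> H) - int (ncycles (\<sigma> \<circ> \<alpha>) H)) div 2)"

definition spanned :: "'a set \<Rightarrow> ('a \<Rightarrow> 'a) \<Rightarrow> ('a \<Rightarrow> 'a) \<Rightarrow> 'a set \<Rightarrow> bool" where
  "spanned H \<sigma> \<alpha> S \<longleftrightarrow> is_map H \<sigma> \<alpha> \<and> S \<subseteq> H \<and> \<alpha> ` S \<subseteq> S"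

text \<open>Covered map: M_{|S} is a connecting unicellular map.\<close>
definition covered :: "'a set \<Rightarrow> ('a \<Rightarrow> 'a) \<Rightarrow> ('a \<Rightarrow> 'a) \<Rightarrow> 'a set \<Rightarrow> bool" where
  "covered H \<sigma> \<alpha> S \<longleftrightarrow> spanned H \<sigma> \<alpha> S \<and>
     (if S = {} then ncycles \<sigma> H = 1
      else transitive_on S (restr \<sigma> S) (restr \<alpha> S)
        \<and> (\<forall>x\<in>H. cyc \<sigma> x \<inter> S \<noteq> {})
        \<and> ncycles (restr \<sigma> S \<circ> restr \<alpha> S) S = 1)"

end

theory Submission
  imports Defs "HOL-Combinatorics.Cycles"
begin


lemma perm_on_permutes: "perm_on \<pi> H \<Longrightarrow> \<pi> permutes H"
  unfolding perm_on_def by (intro bij_imp_permutes) auto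

lemma period:
  assumes "p permutes X" "finite X"
  obtains m where "m > 0" "(p ^^ m) x = x"
proof -
  obtain n where "(p ^^ n) = id" "n > 0"
    using permutation_is_nilpotent[OF permutes_imp_permutation[OF assms(2,1)]] by blast
  thus ?thesis using that by auto
qed

lemma funpow_shift: "(p ^^ i) ((p ^^ j) x) = (p ^^ (i + j)) x"
  by (simp add: funpow_add)

lemma funpow_mod_period:
  assumes "m > 0" "(f ^^ m) x = x"
  shows "(f ^^ n) x = (f ^^ (n mod m)) x"
proof -
  have k: "(f ^^ (m * k)) x = x" for k
    by (induct k) (simp_all add: funpow_add assms(2) comp_def)
  have "(f ^^ n) x = (f ^^ (n mod m)) ((f ^^ (m * (n div m))) x)"
    by (metis add.commute comp_apply funpow_add mult_div_mod_eq)
  thus ?thesis using k by simp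
qed

lemma cyc_period:
  assumes "m > 0" "(f ^^ m) x = x"
  shows "cyc f x = {(f ^^ n) x | n. n < m}"
  unfolding cyc_def using funpow_mod_period[OF assms] assms(1)
  by auto (metis mod_less_divisor)

lemma cyc_self: "x \<in> cyc f x"
  unfolding cyc_def by (auto intro: exI[of _ 0])

lemma cyc_funpow: "(f ^^ n) x \<in> cyc f x"
  unfolding cyc_def by auto

lemma cyc_trans: "y \<in> cyc f x \<Longrightarrow> cyc f y \<subseteq> cyc f x"
  unfolding cyc_def by auto (metis comp_apply funpow_add)

lemma cyc_sym:
  assumes "p permutes X" "finite X" "y \<in> cyc p x"
  shows "x \<in> cyc p y"
proof -
  obtain m where m: "m > 0" "(p ^^ m) x = x" using period[OF assms(1,2)] by blast
  obtain n where n: "y = (p ^^ n) x" using assms(3) unfolding cyc_def by auto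
  have "(p ^^ (m * (n+1) - n)) y = (p ^^ (m * (n+1) - n + n)) x"
    by (simp add: n funpow_add)
  also have "m * (n+1) - n + n = m * (n+1)" using m(1)
  proof -
    have "n \<le> m * (n+1)" using m(1) by (cases m) auto
    thus ?thesis by simp
  qed
  also have "(p ^^ (m * (n+1))) x = x"
    using funpow_mod_period[OF m, of "m*(n+1)"] by simp
  finally show ?thesis using cyc_funpow by metis
qed

lemma cyc_eq:
  assumes "p permutes X" "finite X" "y \<in> cyc p x"
  shows "cyc p y = cyc p x"
  using cyc_trans[OF assms(3)] cyc_trans[OF cyc_sym[OF assms]] by blast

lemma cyc_subset:
  assumes "p permutes X" "x \<in> X"
  shows "cyc p x \<subseteq> X"
  unfolding cyc_def using permutes_in_image[OF permutes_funpow[OF assms(1)]] assms(2) by auto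

lemma funpow_agree:
  assumes "\<And>j. j < n \<Longrightarrow> g ((f ^^ j) x) = f ((f ^^ j) x)"
  shows "(g ^^ n) x = (f ^^ n) x"
  using assms by (induct n) auto

lemma restr_eq:
  assumes "x \<in> A" "n > 0" "(p ^^ n) x \<in> A" "\<And>j. 0 < j \<Longrightarrow> j < n \<Longrightarrow> (p ^^ j) x \<notin> A"
  shows "restr p A x = (p ^^ n) x"
proof -
  have "(LEAST n. 0 < n \<and> (p ^^ n) x \<in> A) = n"
    by (rule Least_equality) (use assms in \<open>auto simp: not_less[symmetric]\<close>)
  thus ?thesis using assms(1) unfolding restr_def by simp
qed

lemma restr_out: "x \<notin> A \<Longrightarrow> restr p A x = x"
  unfolding restr_def by simp

lemma restr_char:
  assumes "p permutes X" "finite X" "x \<in> A"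
  obtains k where "k > 0" "restr p A x = (p ^^ k) x" "(p ^^ k) x \<in> A"
    "\<And>j. 0 < j \<Longrightarrow> j < k \<Longrightarrow> (p ^^ j) x \<notin> A"
proof -
  obtain m where m: "m > 0" "(p ^^ m) x = x" using period[OF assms(1,2)] by blast
  define k where "k = (LEAST n. 0 < n \<and> (p ^^ n) x \<in> A)"
  have P: "0 < k \<and> (p ^^ k) x \<in> A"
    unfolding k_def by (rule LeastI[of _ m]) (use m assms(3) in auto)
  have M: "\<And>j. 0 < j \<Longrightarrow> j < k \<Longrightarrow> (p ^^ j) x \<notin> A"
    using not_less_Least k_def by blast
  show ?thesis
    using that[of k] P M assms(3) unfolding restr_def k_def by auto
qed

lemma restr_in:
  assumes "p permutes X" "finite X" "x \<in> A"
  shows "restr p A x \<in> A"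
  using restr_char[OF assms] by metis

lemma restr_step:
  assumes "x \<in> A" "p x \<in> A"
  shows "restr p A x = p x"
  using restr_eq[of x A 1 p] assms by simp

lemma restr_self:
  assumes "p permutes X"
  shows "restr p X = p"
proof
  fix x show "restr p X x = p x"
    by (cases "x \<in> X") (auto simp: restr_step restr_out permutes_in_image[OF assms] permutes_not_in[OF assms])
qed

lemma cyc_restr:
  assumes "p permutes X" "finite X" "x \<in> A"
  shows "cyc (restr p A) x = cyc p x \<inter> A"
proof
  let ?r = "restr p A"
  have "((?r ^^ n) x) \<in> cyc p x \<inter> A" for n
  proof (induct n)
    case 0 then show ?case using assms(3) cyc_self[of x p] by simp
  next
    case (Suc n)
    define z where "z = (?r ^^ n) x"
    have z: "z \<in> cyc p x" "z \<in> A" using Suc z_def by auto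
    obtain k where k: "?r z = (p ^^ k) z" "(p ^^ k) z \<in> A"
      using restr_char[OF assms(1,2) z(2)] by metis
    have "(p ^^ k) z \<in> cyc p x" using cyc_trans[OF z(1)] cyc_funpow[of k p z] by blast
    thus ?case using k z_def by simp
  qed
  thus "cyc ?r x \<subseteq> cyc p x \<inter> A" unfolding cyc_def by auto
next
  let ?r = "restr p A"
  have "\<And>x. x \<in> A \<Longrightarrow> (p ^^ n) x \<in> A \<Longrightarrow> (p ^^ n) x \<in> cyc ?r x" for n
  proof (induct n rule: less_induct)
    case (less n x)
    show ?case
    proof (cases "n = 0")
      case True then show ?thesis using cyc_self[of x ?r] by simp
    next
      case False
      obtain k where k: "k > 0" "?r x = (p ^^ k) x" "(p ^^ k) x \<in> A"
        "\<And>j. 0 < j \<Longrightarrow> j < k \<Longrightarrow> (p ^^ j) x \<notin> A"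
        using restr_char[OF assms(1,2) less(2)] by metis
      have "k \<le> n"
      proof (rule ccontr)
        assume "\<not> k \<le> n"
        hence "n < k" by simp
        hence "(p ^^ n) x \<notin> A" using k(4)[of n] False by simp
        thus False using less(3) by simp
      qed
      have "(p ^^ (n - k)) (?r x) = (p ^^ (n - k + k)) x" unfolding k(2) by (rule funpow_shift)
      hence eq: "(p ^^ n) x = (p ^^ (n - k)) (?r x)" using \<open>k \<le> n\<close> by simp
      have nk: "n - k < n" using k(1) False by simp
      have rA: "?r x \<in> A" using k(2,3) by simp
      have "(p ^^ (n - k)) (?r x) \<in> A" using eq less(3) by simp
      hence "(p ^^ (n - k)) (?r x) \<in> cyc ?r (?r x)" using less(1)[OF nk rA] by blast
      moreover have "cyc ?r (?r x) \<subseteq> cyc ?r x"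
        by (rule cyc_trans) (use cyc_funpow[of 1 ?r x] in simp)
      ultimately show ?thesis unfolding eq by blast
    qed
  qed
  thus "cyc p x \<inter> A \<subseteq> cyc ?r x" using assms(3) unfolding cyc_def[of p] by auto
qed

lemma restr_inj_aux:
  assumes "x \<in> A" "y \<in> A" "(p^^kx) x = (p^^ky) y" "kx \<le> ky" "inj p" "kx > 0"
     "\<And>j. 0<j \<Longrightarrow> j<ky \<Longrightarrow> (p^^j) y \<notin> A"
  shows "x = y"
proof -
  have "(p^^kx) ((p^^(ky-kx)) y) = (p^^(kx + (ky-kx))) y" by (rule funpow_shift)
  hence "(p^^kx) x = (p^^kx) ((p^^(ky-kx)) y)" using assms(3,4) by simp
  hence "x = (p^^(ky-kx)) y" using inj_fn[OF assms(5)] by (simp add: inj_eq)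
  thus ?thesis using assms(1,6) assms(7)[of "ky-kx"] by (cases "ky - kx = 0") auto
qed

lemma restr_permutes:
  assumes "p permutes X" "finite X" "A \<subseteq> X"
  shows "restr p A permutes A"
proof (rule bij_imp_permutes)
  have fin: "finite A" using assms finite_subset by blast
  have inj: "inj_on (restr p A) A"
  proof (rule inj_onI)
    fix x y assume xy: "x\<in>A" "y\<in>A" "restr p A x = restr p A y"
    obtain kx where kx: "kx > 0" "restr p A x = (p ^^ kx) x"
      "\<And>j. 0 < j \<Longrightarrow> j < kx \<Longrightarrow> (p ^^ j) x \<notin> A"
      using restr_char[OF assms(1,2) xy(1)] by metis
    obtain ky where ky: "ky > 0" "restr p A y = (p ^^ ky) y"
      "\<And>j. 0 < j \<Longrightarrow> j < ky \<Longrightarrow> (p ^^ j) y \<notin> A"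
      using restr_char[OF assms(1,2) xy(2)] by metis
    have ip: "inj p" using permutes_inj[OF assms(1)] .
    have eq: "(p^^kx) x = (p^^ky) y" using xy(3) kx(2) ky(2) by simp
    show "x = y"
    proof (cases "kx \<le> ky")
      case True then show ?thesis
        using restr_inj_aux[where x=x and A=A and y=y and kx=kx and p=p and ky=ky] xy(1,2) eq ip kx(1) ky(3) by blast
    next
      case False then have "ky \<le> kx" by simp
      then have "y = x"
        using restr_inj_aux[where x=y and A=A and y=x and kx=ky and p=p and ky=kx, OF xy(2,1) eq[symmetric] _ ip ky(1) kx(3)] by blast
      then show ?thesis by simp
    qed
  qed
  have sub: "restr p A ` A \<subseteq> A" using restr_in[OF assms(1,2)] by auto
  show "bij_betw (restr p A) A A" unfolding bij_betw_def using inj endo_inj_surj[OF fin sub inj] by simp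
  show "\<And>x. x \<notin> A \<Longrightarrow> restr p A x = x" by (rule restr_out)
qed

lemma ncycles_restr_all:
  assumes "p permutes X" "finite X" "A \<subseteq> X" "\<forall>x\<in>X. cyc p x \<inter> A \<noteq> {}"
  shows "ncycles (restr p A) A = ncycles p X"
proof -
  have e1: "cyc (restr p A) ` A = (\<lambda>C. C \<inter> A) ` (cyc p ` A)"
    using cyc_restr[OF assms(1,2)] by (auto simp: image_image)
  have e2: "cyc p ` A = cyc p ` X"
  proof
    show "cyc p ` A \<subseteq> cyc p ` X" using assms(3) by auto
    show "cyc p ` X \<subseteq> cyc p ` A"
    proof
      fix C assume "C \<in> cyc p ` X"
      then obtain x where x: "x \<in> X" "C = cyc p x" by auto
      then obtain a where a: "a \<in> cyc p x" "a \<in> A" using assms(4) by auto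
      have "cyc p a = C" using cyc_eq[OF assms(1,2) a(1)] x by simp
      thus "C \<in> cyc p ` A" using a(2) by auto
    qed
  qed
  have inj: "inj_on (\<lambda>C. C \<inter> A) (cyc p ` A)"
  proof (rule inj_onI)
    fix C1 C2 assume c: "C1 \<in> cyc p ` A" "C2 \<in> cyc p ` A" "C1 \<inter> A = C2 \<inter> A"
    then obtain x1 x2 where x: "x1 \<in> A" "x2 \<in> A" "C1 = cyc p x1" "C2 = cyc p x2" by auto
    have "x1 \<in> C2" using c(3) x cyc_self[of x1 p] by blast
    thus "C1 = C2" using cyc_eq[OF assms(1,2)] x by metis
  qed
  have "card (cyc (restr p A) ` A) = card (cyc p ` A)" using e1 card_image[OF inj] by simp
  thus ?thesis unfolding ncycles_def e2 .
qed

lemma cyc_stable: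
  assumes "f ` A \<subseteq> A" "x \<in> A"
  shows "cyc f x \<subseteq> A"
proof -
  have "(f ^^ n) x \<in> A" for n by (induct n) (use assms in auto)
  thus ?thesis unfolding cyc_def by auto
qed

lemma ncycles_restr_stable:
  assumes "p permutes X" "finite X" "p ` A \<subseteq> A"
  shows "ncycles (restr p A) A = ncycles p A"
proof -
  have "cyc (restr p A) x = cyc p x" if "x \<in> A" for x
    using cyc_restr[OF assms(1,2) that] cyc_stable[OF assms(3) that] by auto
  hence "cyc (restr p A) ` A = cyc p ` A" by auto
  thus ?thesis unfolding ncycles_def by simp
qed

lemma ncycles_id: "ncycles id X = card X"
proof -
  have c: "cyc id x = {x}" for x unfolding cyc_def by simp
  have "inj_on (cyc id) X" by (rule inj_onI) (simp add: c)
  thus ?thesis unfolding ncycles_def by (simp add: card_image)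
qed

lemma cyc_disjoint:
  assumes "p permutes X" "finite X" "cyc p x \<noteq> cyc p y"
  shows "cyc p x \<inter> cyc p y = {}"
  using cyc_eq[OF assms(1,2)] assms(3) by blast

lemma card_involution:
  assumes "p permutes X" "finite X" "\<forall>x\<in>X. p (p x) = x \<and> p x \<noteq> x" "A \<subseteq> X" "p ` A \<subseteq> A"
  shows "card A = 2 * ncycles p A"
proof -
  have fA: "finite A" using assms(2,4) finite_subset by blast
  have c2: "card (cyc p x) = 2" if "x \<in> A" for x
  proof -
    have "(p ^^ 2) x = x" using assms(3,4) that by (auto simp: numeral_2_eq_2)
    hence "cyc p x = {(p ^^ n) x | n. n < 2}" using cyc_period[of 2 p x] by simp
    also have "\<dots> = {x, p x}"
    proof
      show "{(p ^^ n) x | n. n < 2} \<subseteq> {x, p x}"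
      proof
        fix y assume "y \<in> {(p ^^ n) x | n. n < 2}"
        then obtain n where n: "n < 2" "y = (p ^^ n) x" by blast
        then have "n = 0 \<or> n = 1" by arith
        thus "y \<in> {x, p x}" using n(2) by auto
      qed
      have "x = (p ^^ 0) x" "p x = (p ^^ 1) x" by simp_all
      thus "{x, p x} \<subseteq> {(p ^^ n) x | n. n < 2}" by fastforce
    qed
    finally have "cyc p x = {x, p x}" .
    moreover have "p x \<noteq> x" using assms(3,4) that by auto
    ultimately show ?thesis by simp
  qed
  have U: "\<Union>(cyc p ` A) = A"
  proof
    show "\<Union>(cyc p ` A) \<subseteq> A" using cyc_stable[OF assms(5)] by blast
    show "A \<subseteq> \<Union>(cyc p ` A)"
    proof
      fix x assume "x \<in> A" thus "x \<in> \<Union>(cyc p ` A)" using cyc_self[of x p] by blast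
    qed
  qed
  have "2 * card (cyc p ` A) = card (\<Union>(cyc p ` A))"
  proof (rule card_partition)
    show "finite (cyc p ` A)" using fA by simp
    show "finite (\<Union>(cyc p ` A))" unfolding U by (rule fA)
    show "\<And>c. c \<in> cyc p ` A \<Longrightarrow> card c = 2" using c2 by blast
    show "\<And>c1 c2. c1 \<in> cyc p ` A \<Longrightarrow> c2 \<in> cyc p ` A \<Longrightarrow> c1 \<noteq> c2 \<Longrightarrow> c1 \<inter> c2 = {}"
      using cyc_disjoint[OF assms(1,2)] by blast
  qed
  thus ?thesis unfolding ncycles_def U by simp
qed

lemma ncycles_Un:
  assumes "p permutes X" "finite A" "finite B" "p ` A \<subseteq> A" "p ` B \<subseteq> B" "A \<inter> B = {}"
  shows "ncycles p (A \<union> B) = ncycles p A + ncycles p B"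
proof -
  have d: "cyc p ` A \<inter> cyc p ` B = {}"
  proof (rule ccontr)
    assume "cyc p ` A \<inter> cyc p ` B \<noteq> {}"
    then obtain x y where "x \<in> A" "y \<in> B" "cyc p x = cyc p y" by auto
    thus False using cyc_stable[OF assms(4)] cyc_self[of y p] assms(6) by blast
  qed
  show ?thesis unfolding ncycles_def image_Un using card_Un_disjoint[OF _ _ d] assms(2,3) by simp
qed

lemma least_period:
  assumes "p permutes X" "finite X"
  obtains L where "L > 0" "(p ^^ L) x = x" "\<And>j. 0 < j \<Longrightarrow> j < L \<Longrightarrow> (p ^^ j) x \<noteq> x"
proof -
  obtain m where m: "m > 0" "(p ^^ m) x = x" using period[OF assms] by blast
  define L where "L = (LEAST n. 0 < n \<and> (p ^^ n) x = x)"
  have P: "0 < L \<and> (p ^^ L) x = x"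
    unfolding L_def by (rule LeastI[of _ m]) (use m in auto)
  have M: "\<And>j. 0 < j \<Longrightarrow> j < L \<Longrightarrow> (p ^^ j) x \<noteq> x"
    using not_less_Least L_def by blast
  show ?thesis using that P M by blast
qed

lemma distinct_aux:
  assumes "inj p" "\<And>j. 0 < j \<Longrightarrow> j < L \<Longrightarrow> (p ^^ j) x \<noteq> x"
    "i < L" "j < L" "(p ^^ i) x = (p ^^ j) x" "i \<le> j"
  shows "i = j"
proof -
  have "(p ^^ (j - i)) x = x" using funpow_diff[OF assms(1,6,5)] .
  thus ?thesis using assms(2)[of "j - i"] assms(3,4,6) by (cases "j - i = 0") auto
qed

lemma distinct_orbit:
  assumes "inj p" "\<And>j. 0 < j \<Longrightarrow> j < L \<Longrightarrow> (p ^^ j) x \<noteq> x"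
    "i < L" "j < L" "(p ^^ i) x = (p ^^ j) x"
  shows "i = j"
  using distinct_aux[OF assms] distinct_aux[OF assms(1,2,4,3) assms(5)[symmetric]] by linarith


lemma K1:
  assumes p: "p permutes X" and fin: "finite X" and ab: "a \<in> X" "b \<in> X" "a \<noteq> b"
    and bc: "b \<in> cyc p a"
  shows "ncycles (p \<circ> Transposition.transpose a b) X = ncycles p X + 1"
proof -
  define r where "r = p \<circ> Transposition.transpose a b"
  have rp: "r permutes X" unfolding r_def
    by (rule permutes_compose[OF permutes_swap_id[OF ab(1,2)] p])
  have ra: "r a = p b" and rb: "r b = p a" and ro: "\<And>x. x \<noteq> a \<Longrightarrow> x \<noteq> b \<Longrightarrow> r x = p x"
    by (auto simp: r_def)
  have ip: "inj p" using permutes_inj[OF p] .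
  obtain L where L: "L > 0" "(p ^^ L) a = a" "\<And>j. 0 < j \<Longrightarrow> j < L \<Longrightarrow> (p ^^ j) a \<noteq> a"
    using least_period[OF p fin] by blast
  have D: "\<And>i j. i < L \<Longrightarrow> j < L \<Longrightarrow> (p ^^ i) a = (p ^^ j) a \<Longrightarrow> i = j"
    using distinct_orbit[OF ip L(3)] by blast
  have cpa: "cyc p a = {(p ^^ n) a | n. n < L}" using cyc_period[OF L(1,2)] .
  obtain k where k: "b = (p ^^ k) a" "k < L" using bc cpa by auto
  have k0: "k \<noteq> 0" using k ab(3) by (metis funpow_0)
  have avoid: "\<And>i. i < L \<Longrightarrow> i \<noteq> 0 \<Longrightarrow> i \<noteq> k \<Longrightarrow> r ((p ^^ i) a) = p ((p ^^ i) a)"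
  proof -
    fix i assume i: "i < L" "i \<noteq> 0" "i \<noteq> k"
    have "(p ^^ i) a \<noteq> a" using D[of i 0] i L(1) by auto
    moreover have "(p ^^ i) a \<noteq> b" using D[of i k] i k by auto
    ultimately show "r ((p ^^ i) a) = p ((p ^^ i) a)" using ro by blast
  qed
  have seg2: "(r ^^ j) (p a) = (p ^^ (j + 1)) a" if "j + 1 \<le> k" for j
  proof -
    have "(r ^^ j) ((p ^^ 1) a) = (p ^^ j) ((p ^^ 1) a)"
    proof (rule funpow_agree)
      fix i assume "i < j"
      thus "r ((p ^^ i) ((p ^^ 1) a)) = p ((p ^^ i) ((p ^^ 1) a))"
        unfolding funpow_shift using avoid[of "i+1"] that k by auto
    qed
    thus ?thesis unfolding funpow_shift by simp
  qed
  have rb_pow: "(r ^^ (j + 1)) b = (p ^^ (j + 1)) a" if "j + 1 \<le> k" for j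
    using seg2[OF that] rb by (simp add: funpow_Suc_right del: funpow.simps)
  have rbk: "(r ^^ k) b = b" using rb_pow[of "k - 1"] k0 k(1) by simp
  have crb: "cyc r b = {(r ^^ n) b | n. n < k}" using cyc_period[of k r b] rbk k0 by simp
  have a_notin: "a \<notin> cyc r b"
  proof
    assume "a \<in> cyc r b"
    then obtain n where n: "n < k" "a = (r ^^ n) b" using crb by auto
    show False
    proof (cases n)
      case 0 then show False using n ab(3) by simp
    next
      case (Suc j)
      have "(p ^^ (j+1)) a = a" using rb_pow[of j] n(1) n(2)[symmetric] Suc by simp
      thus False using L(3)[of "j+1"] n Suc k(2) by simp
    qed
  qed
  have seg1: "(r ^^ (j + 1)) a = (p ^^ (k + 1 + j)) a" if "k + 1 + j \<le> L" for j
  proof -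
    have "(r ^^ j) ((p ^^ (k+1)) a) = (p ^^ j) ((p ^^ (k+1)) a)"
    proof (rule funpow_agree)
      fix i assume "i < j"
      thus "r ((p ^^ i) ((p ^^ (k+1)) a)) = p ((p ^^ i) ((p ^^ (k+1)) a))"
        unfolding funpow_shift using avoid[of "i+(k+1)"] that by auto
    qed
    moreover have "r a = (p ^^ (k+1)) a" using ra k(1) by simp
    moreover have "(r ^^ (j + 1)) a = (r ^^ j) (r a)" by (simp add: funpow_Suc_right del: funpow.simps)
    moreover have "j + (k + 1) = k + 1 + j" by simp
    ultimately show ?thesis unfolding funpow_shift by metis
  qed
  have cover: "cyc p a \<subseteq> cyc r a \<union> cyc r b"
  proof
    fix x assume "x \<in> cyc p a"
    then obtain j where j: "j < L" "x = (p ^^ j) a" using cpa by auto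
    show "x \<in> cyc r a \<union> cyc r b"
    proof (cases "j = 0")
      case True then show ?thesis using j cyc_self by auto
    next
      case False
      show ?thesis
      proof (cases "j \<le> k")
        case True
        then have "x = (r ^^ (j - 1 + 1)) b" using rb_pow[of "j - 1"] False j by simp
        then show ?thesis using cyc_funpow[of "j - 1 + 1" r b] by blast
      next
        case False
        then have "x = (r ^^ (j - k - 1 + 1)) a" using seg1[of "j - k - 1"] j by simp
        then show ?thesis using cyc_funpow[of "j - k - 1 + 1" r a] by blast
      qed
    qed
  qed
  have other: "cyc r x = cyc p x" if "x \<notin> cyc p a" for x
  proof -
    have "\<And>n. (r ^^ n) x = (p ^^ n) x"
    proof (rule funpow_agree)
      fix n j
      have "(p ^^ j) x \<noteq> a"
      proof
        assume "(p ^^ j) x = a"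
        hence "a \<in> cyc p x" using cyc_funpow[of j p x] by simp
        hence "x \<in> cyc p a" by (rule cyc_sym[OF p fin])
        thus False using that by blast
      qed
      moreover have "(p ^^ j) x \<noteq> b"
      proof
        assume "(p ^^ j) x = b"
        hence "b \<in> cyc p x" using cyc_funpow[of j p x] by simp
        hence "x \<in> cyc p b" by (rule cyc_sym[OF p fin])
        moreover have "cyc p b = cyc p a" by (rule cyc_eq[OF p fin bc])
        ultimately show False using that by blast
      qed
      ultimately show "r ((p ^^ j) x) = p ((p ^^ j) x)" using ro by blast
    qed
    thus ?thesis unfolding cyc_def by simp
  qed
  let ?Cs = "cyc p ` X"
  let ?C = "cyc p a"
  have img: "cyc r ` X = (?Cs - {?C}) \<union> {cyc r a, cyc r b}"
  proof
    show "cyc r ` X \<subseteq> (?Cs - {?C}) \<union> {cyc r a, cyc r b}"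
    proof
      fix D assume "D \<in> cyc r ` X"
      then obtain x where x: "x \<in> X" "D = cyc r x" by auto
      show "D \<in> (?Cs - {?C}) \<union> {cyc r a, cyc r b}"
      proof (cases "x \<in> cyc p a")
        case True
        then have "x \<in> cyc r a \<or> x \<in> cyc r b" using cover by blast
        then have "cyc r x = cyc r a \<or> cyc r x = cyc r b"
          using cyc_eq[OF rp fin, of x a] cyc_eq[OF rp fin, of x b] by blast
        then show ?thesis using x(2) by blast
      next
        case False
        then have "cyc p x \<noteq> ?C" using cyc_self[of x p] by blast
        moreover have "cyc p x \<in> ?Cs" using x(1) by blast
        ultimately show ?thesis using other[OF False] x(2) by blast
      qed
    qed
    show "(?Cs - {?C}) \<union> {cyc r a, cyc r b} \<subseteq> cyc r ` X"
    proof
      fix D assume D: "D \<in> (?Cs - {?C}) \<union> {cyc r a, cyc r b}"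
      show "D \<in> cyc r ` X"
      proof (cases "D \<in> {cyc r a, cyc r b}")
        case True then show ?thesis using ab by auto
      next
        case False
        then obtain x where x: "x \<in> X" "D = cyc p x" "cyc p x \<noteq> ?C" using D by auto
        have "x \<notin> cyc p a"
        proof
          assume "x \<in> cyc p a"
          hence "cyc p x = cyc p a" by (rule cyc_eq[OF p fin])
          with x(3) show False by simp
        qed
        then have "D = cyc r x" using other x(2) by simp
        then show ?thesis using x(1) by blast
      qed
    qed
  qed
  have d1: "cyc r a \<notin> ?Cs - {?C}"
  proof
    assume "cyc r a \<in> ?Cs - {?C}"
    then obtain x where c: "cyc r a = cyc p x" "cyc p x \<noteq> ?C" by blast
    have "a \<in> cyc p x" using c(1) cyc_self[of a r] by simp
    hence "cyc p a = cyc p x" by (rule cyc_eq[OF p fin])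
    with c(2) show False by simp
  qed
  have d2: "cyc r b \<notin> ?Cs - {?C}"
  proof
    assume "cyc r b \<in> ?Cs - {?C}"
    then obtain x where c: "cyc r b = cyc p x" "cyc p x \<noteq> ?C" by blast
    have "b \<in> cyc p x" using c(1) cyc_self[of b r] by simp
    hence "cyc p b = cyc p x" by (rule cyc_eq[OF p fin])
    moreover have "cyc p b = cyc p a" by (rule cyc_eq[OF p fin bc])
    ultimately show False using c(2) by simp
  qed
  have d3: "cyc r a \<noteq> cyc r b" using a_notin cyc_self[of a r] by auto
  have fCs: "finite ?Cs" using fin by simp
  have Cin: "?C \<in> ?Cs" using ab by auto
  have "card (cyc r ` X) = card (?Cs - {?C}) + 2"
    unfolding img using d1 d2 d3 fCs by (subst card_Un_disjoint) auto
  also have "\<dots> = card ?Cs + 1" using Cin fCs card_Diff_singleton[OF Cin]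
    by (metis Suc_1 add_Suc_right card_0_eq empty_iff Suc_diff_1 not_gr0 Suc_eq_plus1 plus_1_eq_Suc)
  finally show ?thesis unfolding ncycles_def r_def .
qed


lemma K:
  assumes p: "p permutes X" and fin: "finite X" and ab: "a \<in> X" "b \<in> X" "a \<noteq> b"
  shows "even (ncycles (p \<circ> Transposition.transpose a b) X + ncycles p X + 1)"
proof (cases "b \<in> cyc p a")
  case True then show ?thesis using K1[OF assms True] by simp
next
  case False
  define r where "r = p \<circ> Transposition.transpose a b"
  have rp: "r permutes X" unfolding r_def
    by (rule permutes_compose[OF permutes_swap_id[OF ab(1,2)] p])
  have ra: "r a = p b" and ro: "\<And>x. x \<noteq> a \<Longrightarrow> x \<noteq> b \<Longrightarrow> r x = p x"
    by (auto simp: r_def)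
  obtain M where M: "M > 0" "(p ^^ M) b = b" "\<And>j. 0 < j \<Longrightarrow> j < M \<Longrightarrow> (p ^^ j) b \<noteq> b"
    using least_period[OF p fin] by blast
  have "(r ^^ (M - 1)) ((p ^^ 1) b) = (p ^^ (M - 1)) ((p ^^ 1) b)"
  proof (rule funpow_agree)
    fix i assume i: "i < M - 1"
    have ne_b: "(p ^^ (i + 1)) b \<noteq> b" using M(3)[of "i+1"] i by simp
    have ne_a: "(p ^^ (i + 1)) b \<noteq> a"
    proof
      assume "(p ^^ (i + 1)) b = a"
      hence "a \<in> cyc p b" using cyc_funpow[of "i+1" p b] by simp
      hence "b \<in> cyc p a" by (rule cyc_sym[OF p fin])
      thus False using False by blast
    qed
    show "r ((p ^^ i) ((p ^^ 1) b)) = p ((p ^^ i) ((p ^^ 1) b))"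
      unfolding funpow_shift using ro[OF ne_a ne_b] .
  qed
  hence "(r ^^ (M - 1)) (r a) = b" unfolding funpow_shift using M(1,2) ra by simp
  hence "(r ^^ (M - 1 + 1)) a = b" by (simp add: funpow_Suc_right del: funpow.simps)
  hence bin: "b \<in> cyc r a" using cyc_funpow[of "M - 1 + 1" r a] by simp
  have "r \<circ> Transposition.transpose a b = p" unfolding r_def by (simp add: comp_assoc)
  hence "ncycles p X = ncycles r X + 1" using K1[OF rp fin ab bin] by simp
  thus ?thesis unfolding r_def by simp
qed

lemma parity_aux:
  assumes "finite X" "q permutes X"
  shows "\<exists>n. \<forall>p. p permutes X \<longrightarrow> even (ncycles (p \<circ> q) X + ncycles p X + n)"
  using assms
proof (induct q rule: permutes_rev_induct)
  case id
  show ?case by (rule exI[of _ 0]) simp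
next
  case (swap a b q)
  then obtain n where n: "\<forall>p. p permutes X \<longrightarrow> even (ncycles (p \<circ> q) X + ncycles p X + n)" by blast
  show ?case
  proof (rule exI[of _ "n + 1"], intro allI impI)
    fix p assume pp: "p permutes X"
    have pq: "p \<circ> q permutes X" by (rule permutes_compose[OF swap(5) pp])
    have e1: "even (ncycles ((p \<circ> q) \<circ> Transposition.transpose a b) X + ncycles (p \<circ> q) X + 1)"
      by (rule K[OF pq assms(1) swap(1,2,3)])
    have e2: "even (ncycles (p \<circ> q) X + ncycles p X + n)" using n pp by blast
    have "p \<circ> (q \<circ> Transposition.transpose a b) = (p \<circ> q) \<circ> Transposition.transpose a b"
      by (simp add: comp_assoc)
    thus "even (ncycles (p \<circ> (q \<circ> Transposition.transpose a b)) X + ncycles p X + (n + 1))"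
      using e1 e2 by presburger
  qed
qed

lemma parity:
  assumes "finite X" "p permutes X" "q permutes X"
  shows "even (ncycles (p \<circ> q) X + ncycles p X + ncycles q X + card X)"
proof -
  obtain n where n: "\<forall>p. p permutes X \<longrightarrow> even (ncycles (p \<circ> q) X + ncycles p X + n)"
    using parity_aux[OF assms(1,3)] by blast
  have "even (ncycles (p \<circ> q) X + ncycles p X + n)" using n assms(2) by blast
  moreover have "even (ncycles (id \<circ> q) X + ncycles id X + n)" using n permutes_id by blast
  ultimately show ?thesis unfolding ncycles_id by simp presburger
qed



definition tour :: "'a set \<Rightarrow> ('a \<Rightarrow> 'a) \<Rightarrow> ('a \<Rightarrow> 'a) \<Rightarrow> 'a \<Rightarrow> 'a" where
  "tour S \<sigma> \<alpha> = (\<lambda>h. if h \<in> S then \<sigma> (\<alpha> h) else \<sigma> h)"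

lemma tour_permutes:
  assumes "\<sigma> permutes H" "\<forall>x\<in>H. \<alpha> (\<alpha> x) = x" "S \<subseteq> H" "\<alpha> ` S \<subseteq> S"
  shows "tour S \<sigma> \<alpha> permutes H"
proof -
  define \<beta> where "\<beta> = (\<lambda>h. if h \<in> S then \<alpha> h else h)"
  have inv: "\<beta> (\<beta> y) = y" for y
    using assms(2,3,4) unfolding \<beta>_def by (cases "y \<in> S") auto
  have "\<beta> permutes H" unfolding permutes_def
  proof (intro conjI allI impI)
    fix x assume "x \<notin> H" thus "\<beta> x = x" using assms(3) unfolding \<beta>_def by auto
  next
    fix y show "\<exists>!x. \<beta> x = y"
    proof (rule ex1I[of _ "\<beta> y"])
      show "\<beta> (\<beta> y) = y" by (rule inv)
      fix x assume "\<beta> x = y" thus "x = \<beta> y" using inv[of x] by simp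
    qed
  qed
  moreover have "tour S \<sigma> \<alpha> = \<sigma> \<circ> \<beta>" unfolding tour_def \<beta>_def by auto
  ultimately show ?thesis using permutes_compose assms(1) by metis
qed

lemma restr_tour:
  assumes sp: "\<sigma> permutes H" and ap: "\<alpha> permutes H" and fin: "finite H"
    and S: "S \<subseteq> H" "\<alpha> ` S \<subseteq> S"
  shows "restr (tour S \<sigma> \<alpha>) S = restr \<sigma> S \<circ> restr \<alpha> S"
proof
  fix x
  let ?t = "tour S \<sigma> \<alpha>"
  show "restr ?t S x = (restr \<sigma> S \<circ> restr \<alpha> S) x"
  proof (cases "x \<in> S")
    case False then show ?thesis by (simp add: restr_out)
  next
    case True
    define y where "y = \<alpha> x"
    have yS: "y \<in> S" using True S(2) y_def by auto
    have ra: "restr \<alpha> S x = y" unfolding y_def by (rule restr_step[OF True]) (use yS y_def in simp)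
    obtain k where k: "k > 0" "restr \<sigma> S y = (\<sigma> ^^ k) y" "(\<sigma> ^^ k) y \<in> S"
      "\<And>j. 0 < j \<Longrightarrow> j < k \<Longrightarrow> (\<sigma> ^^ j) y \<notin> S"
      using restr_char[OF sp fin yS] by metis
    have tx: "?t x = (\<sigma> ^^ 1) y" using True unfolding tour_def y_def by simp
    have seg: "(?t ^^ (i + 1)) x = (\<sigma> ^^ (i + 1)) y" if "i + 1 \<le> k" for i
    proof -
      have "(?t ^^ i) ((\<sigma> ^^ 1) y) = (\<sigma> ^^ i) ((\<sigma> ^^ 1) y)"
      proof (rule funpow_agree)
        fix j assume "j < i"
        hence "(\<sigma> ^^ (j + 1)) y \<notin> S" using k(4)[of "j+1"] that by simp
        thus "?t ((\<sigma> ^^ j) ((\<sigma> ^^ 1) y)) = \<sigma> ((\<sigma> ^^ j) ((\<sigma> ^^ 1) y))"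
          unfolding funpow_shift tour_def by simp
      qed
      moreover have "(?t ^^ (i + 1)) x = (?t ^^ i) (?t x)"
        by (simp add: funpow_Suc_right del: funpow.simps)
      ultimately show ?thesis unfolding tx funpow_shift by simp
    qed
    have tk: "(?t ^^ k) x = (\<sigma> ^^ k) y" using seg[of "k - 1"] k(1) by simp
    have "restr ?t S x = (?t ^^ k) x"
    proof (rule restr_eq[OF True k(1)])
      show "(?t ^^ k) x \<in> S" using tk k(3) by simp
      fix j assume j: "0 < j" "j < k"
      have "(?t ^^ (j - 1 + 1)) x = (\<sigma> ^^ (j - 1 + 1)) y" using seg[of "j - 1"] j by simp
      thus "(?t ^^ j) x \<notin> S" using k(4)[OF j] j(1) by simp
    qed
    thus ?thesis using tk k(2) ra by simp
  qed
qed

lemma cyc_one: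
  assumes "p permutes X" "finite X" "x \<in> X" "ncycles p X = 1"
  shows "cyc p x = X"
proof -
  obtain D where D: "cyc p ` X = {D}" using assms(4) unfolding ncycles_def by (rule card_1_singletonE)
  have cx: "cyc p x = D" using D assms(3) by blast
  have "X \<subseteq> D"
  proof
    fix y assume "y \<in> X"
    hence "cyc p y = D" using D by blast
    thus "y \<in> D" using cyc_self[of y p] by simp
  qed
  thus ?thesis using cx cyc_subset[OF assms(1,3)] by blast
qed

lemma one_cyc:
  assumes "X \<noteq> {}" "\<And>x. x \<in> X \<Longrightarrow> cyc p x = X"
  shows "ncycles p X = 1"
proof -
  have "cyc p ` X = {X}" using assms by auto
  thus ?thesis unfolding ncycles_def by simp
qed


lemma tour_cyclic:
  assumes sp: "\<sigma> permutes H" and ap: "\<alpha> permutes H" and fin: "finite H"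
    and inv: "\<forall>x\<in>H. \<alpha> (\<alpha> x) = x" and S: "S \<subseteq> H" "\<alpha> ` S \<subseteq> S" "S \<noteq> {}"
    and one: "ncycles (restr \<sigma> S \<circ> restr \<alpha> S) S = 1"
    and meet: "\<forall>x\<in>H. cyc \<sigma> x \<inter> S \<noteq> {}"
  shows "ncycles (tour S \<sigma> \<alpha>) H = 1"
proof -
  let ?t = "tour S \<sigma> \<alpha>"
  have tp: "?t permutes H" by (rule tour_permutes[OF sp inv S(1,2)])
  obtain s0 where s0: "s0 \<in> S" using S(3) by blast
  have Rp: "restr ?t S permutes S" by (rule restr_permutes[OF tp fin S(1)])
  have finS: "finite S" using fin S(1) finite_subset by blast
  have "cyc (restr ?t S) s0 = S"
    by (rule cyc_one[OF Rp finS s0]) (use one restr_tour[OF sp ap fin S(1,2)] in simp)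
  hence Ssub: "S \<subseteq> cyc ?t s0" using cyc_restr[OF tp fin s0] by blast
  have Hsub: "h \<in> cyc ?t s0" if hH: "h \<in> H" for h
  proof -
    let ?P = "\<lambda>k. \<exists>t\<in>S. (\<sigma> ^^ k) t = h"
    obtain t where t: "t \<in> cyc \<sigma> h" "t \<in> S" using meet hH by blast
    have "h \<in> cyc \<sigma> t" by (rule cyc_sym[OF sp fin t(1)])
    then obtain k where "(\<sigma> ^^ k) t = h" unfolding cyc_def by blast
    hence Pk: "?P k" using t(2) by blast
    define k0 where "k0 = (LEAST k. ?P k)"
    have Pk0: "?P k0" unfolding k0_def by (rule LeastI[of _ k]) (rule Pk)
    then obtain t0 where t0: "t0 \<in> S" "(\<sigma> ^^ k0) t0 = h" by blast
    show ?thesis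
    proof (cases "k0 = 0")
      case True then show ?thesis using t0 Ssub by auto
    next
      case False
      have notS: "(\<sigma> ^^ j) t0 \<notin> S" if "0 < j" "j < k0" for j
      proof
        assume jS: "(\<sigma> ^^ j) t0 \<in> S"
        have "(\<sigma> ^^ (k0 - j)) ((\<sigma> ^^ j) t0) = (\<sigma> ^^ (k0 - j + j)) t0" by (rule funpow_shift)
        hence "(\<sigma> ^^ (k0 - j)) ((\<sigma> ^^ j) t0) = h" using t0(2) that by simp
        hence "?P (k0 - j)" using jS by blast
        hence "k0 \<le> k0 - j" unfolding k0_def by (rule Least_le)
        thus False using that by simp
      qed
      have at0: "\<alpha> t0 \<in> S" using S(2) t0(1) by blast
      have t0H: "t0 \<in> H" using S(1) t0(1) by blast
      have tat: "?t (\<alpha> t0) = (\<sigma> ^^ 1) t0" using at0 inv t0H unfolding tour_def by simp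
      have "(?t ^^ (k0 - 1)) ((\<sigma> ^^ 1) t0) = (\<sigma> ^^ (k0 - 1)) ((\<sigma> ^^ 1) t0)"
      proof (rule funpow_agree)
        fix j assume "j < k0 - 1"
        hence "(\<sigma> ^^ (j + 1)) t0 \<notin> S" using notS[of "j+1"] by simp
        thus "?t ((\<sigma> ^^ j) ((\<sigma> ^^ 1) t0)) = \<sigma> ((\<sigma> ^^ j) ((\<sigma> ^^ 1) t0))"
          unfolding funpow_shift tour_def by simp
      qed
      hence "(?t ^^ (k0 - 1)) (?t (\<alpha> t0)) = h" unfolding tat funpow_shift using False t0(2) by simp
      hence "(?t ^^ (k0 - 1 + 1)) (\<alpha> t0) = h" by (simp add: funpow_Suc_right del: funpow.simps)
      hence "h \<in> cyc ?t (\<alpha> t0)" using cyc_funpow[of "k0 - 1 + 1" ?t "\<alpha> t0"] by simp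
      moreover have "cyc ?t (\<alpha> t0) \<subseteq> cyc ?t s0" by (rule cyc_trans) (use Ssub at0 in blast)
      ultimately show ?thesis by blast
    qed
  qed
  have s0H: "s0 \<in> H" using s0 S(1) by blast
  show ?thesis
  proof (rule one_cyc)
    show "H \<noteq> {}" using s0H by blast
    fix x assume xH: "x \<in> H"
    have "cyc ?t x = cyc ?t s0" by (rule cyc_eq[OF tp fin Hsub[OF xH]])
    thus "cyc ?t x = H" using Hsub cyc_subset[OF tp s0H] by blast
  qed
qed

lemma covered_of_tour:
  assumes sp: "\<sigma> permutes H" and ap: "\<alpha> permutes H" and fin: "finite H"
    and inv: "\<forall>x\<in>H. \<alpha> (\<alpha> x) = x" and S: "S \<subseteq> H" "\<alpha> ` S \<subseteq> S" "S \<noteq> {}"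
    and cy: "ncycles (tour S \<sigma> \<alpha>) H = 1"
  shows "transitive_on S (restr \<sigma> S) (restr \<alpha> S)"
    "\<forall>x\<in>H. cyc \<sigma> x \<inter> S \<noteq> {}"
    "ncycles (restr \<sigma> S \<circ> restr \<alpha> S) S = 1"
proof -
  let ?t = "tour S \<sigma> \<alpha>"
  let ?R = "restr \<sigma> S \<circ> restr \<alpha> S"
  have tp: "?t permutes H" by (rule tour_permutes[OF sp inv S(1,2)])
  have all: "cyc ?t x = H" if "x \<in> H" for x by (rule cyc_one[OF tp fin that cy])
  have RR: "restr ?t S = ?R" by (rule restr_tour[OF sp ap fin S(1,2)])
  have cR: "cyc ?R x = S" if "x \<in> S" for x
  proof -
    have "cyc (restr ?t S) x = cyc ?t x \<inter> S" by (rule cyc_restr[OF tp fin that])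
    also have "\<dots> = S" using all[of x] that S(1) by blast
    finally show ?thesis unfolding RR .
  qed
  show "ncycles ?R S = 1" by (rule one_cyc[OF S(3) cR])
  show "\<forall>x\<in>H. cyc \<sigma> x \<inter> S \<noteq> {}"
  proof (intro ballI notI)
    fix x assume xH: "x \<in> H" and e: "cyc \<sigma> x \<inter> S = {}"
    have "\<And>n. (?t ^^ n) x = (\<sigma> ^^ n) x"
    proof (rule funpow_agree)
      fix n j
      have "(\<sigma> ^^ j) x \<notin> S" using e cyc_funpow[of j \<sigma> x] by blast
      thus "?t ((\<sigma> ^^ j) x) = \<sigma> ((\<sigma> ^^ j) x)" unfolding tour_def by simp
    qed
    hence "cyc ?t x = cyc \<sigma> x" unfolding cyc_def by simp
    hence "S \<subseteq> cyc \<sigma> x" using all[OF xH] S(1) by simp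
    thus False using e S(3) by blast
  qed
  show "transitive_on S (restr \<sigma> S) (restr \<alpha> S)"
    unfolding transitive_on_def
  proof (intro ballI)
    fix x y assume xS: "x \<in> S" and yS: "y \<in> S"
    let ?Rel = "{(z, restr \<sigma> S z) |z. z \<in> S} \<union> {(z, restr \<alpha> S z) |z. z \<in> S}"
    have Rp: "?R permutes S" unfolding RR[symmetric] by (rule restr_permutes[OF tp fin S(1)])
    have finS: "finite S" using fin S(1) finite_subset by blast
    have step: "(x, (?R ^^ n) x) \<in> ?Rel\<^sup>* \<and> (?R ^^ n) x \<in> S" for n
    proof (induct n)
      case 0 show ?case using xS by simp
    next
      case (Suc n)
      define z where "z = (?R ^^ n) x"
      have z: "(x, z) \<in> ?Rel\<^sup>*" "z \<in> S" using Suc unfolding z_def by blast+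
      have az: "restr \<alpha> S z \<in> S" by (rule restr_in[OF ap fin z(2)])
      have "(z, restr \<alpha> S z) \<in> ?Rel" using z(2) by blast
      moreover have "(restr \<alpha> S z, restr \<sigma> S (restr \<alpha> S z)) \<in> ?Rel" using az by blast
      ultimately have "(x, restr \<sigma> S (restr \<alpha> S z)) \<in> ?Rel\<^sup>*"
        using z(1) by (meson rtrancl_into_rtrancl)
      moreover have "restr \<sigma> S (restr \<alpha> S z) \<in> S" by (rule restr_in[OF sp fin az])
      moreover have eqs: "(?R ^^ Suc n) x = restr \<sigma> S (restr \<alpha> S z)"
        unfolding z_def by (simp only: funpow.simps comp_apply)
      ultimately show ?case by (simp only: eqs)
    qed
    have "y \<in> cyc ?R x" using cR[OF xS] yS by simp
    then obtain n where "y = (?R ^^ n) x" unfolding cyc_def by blast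
    thus "(x, y) \<in> ?Rel\<^sup>*" using step by simp
  qed
qed


lemma covered_iff:
  assumes sp: "spanned H \<sigma> \<alpha> S"
  shows "covered H \<sigma> \<alpha> S \<longleftrightarrow> ncycles (tour S \<sigma> \<alpha>) H = 1"
proof -
  have m: "is_map H \<sigma> \<alpha>" and S: "S \<subseteq> H" "\<alpha> ` S \<subseteq> S" using sp unfolding spanned_def by auto
  have fin: "finite H" and sgp: "\<sigma> permutes H" and ap: "\<alpha> permutes H"
    and inv: "\<forall>x\<in>H. \<alpha> (\<alpha> x) = x"
    using m unfolding is_map_def by (auto intro: perm_on_permutes)
  show ?thesis
  proof (cases "S = {}")
    case True
    have "tour S \<sigma> \<alpha> = \<sigma>" unfolding tour_def True by simp
    thus ?thesis using sp True unfolding covered_def by simp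
  next
    case False
    show ?thesis
    proof
      assume "covered H \<sigma> \<alpha> S"
      hence one: "ncycles (restr \<sigma> S \<circ> restr \<alpha> S) S = 1" and meet: "\<forall>x\<in>H. cyc \<sigma> x \<inter> S \<noteq> {}"
        using False unfolding covered_def by auto
      show "ncycles (tour S \<sigma> \<alpha>) H = 1" by (rule tour_cyclic[OF sgp ap fin inv S False one meet])
    next
      assume cy: "ncycles (tour S \<sigma> \<alpha>) H = 1"
      show "covered H \<sigma> \<alpha> S"
        unfolding covered_def using sp False covered_of_tour[OF sgp ap fin inv S False cy] by simp
    qed
  qed
qed

theorem mainTheorem7:
  fixes H S :: "'a set" and \<sigma> \<alpha> :: "'a \<Rightarrow> 'a" and r :: 'a
  assumes "r \<in> H"
    and "covered H \<sigma> \<alpha> S"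
  shows "covered H (\<sigma> \<circ> \<alpha>) \<alpha> (H - S)
    \<and> genus H \<sigma> \<alpha> = genus S (restr \<sigma> S) (restr \<alpha> S)
        + genus (H - S) (restr (\<sigma> \<circ> \<alpha>) (H - S)) (restr \<alpha> (H - S))"
proof -
  have sp: "spanned H \<sigma> \<alpha> S" using assms(2) unfolding covered_def by simp
  have m: "is_map H \<sigma> \<alpha>" and S: "S \<subseteq> H" "\<alpha> ` S \<subseteq> S" using sp unfolding spanned_def by auto
  have fin: "finite H" and sgp: "\<sigma> permutes H" and ap: "\<alpha> permutes H"
    and inv: "\<forall>x\<in>H. \<alpha> (\<alpha> x) = x" and fpf: "\<forall>x\<in>H. \<alpha> (\<alpha> x) = x \<and> \<alpha> x \<noteq> x"
    and tr: "transitive_on H \<sigma> \<alpha>"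
    using m unfolding is_map_def by (auto intro: perm_on_permutes)
  have pos: "perm_on \<sigma> H" "perm_on \<alpha> H" using m unfolding is_map_def by auto
  let ?\<phi> = "\<sigma> \<circ> \<alpha>"
  let ?S' = "H - S"
  have aa: "\<alpha> (\<alpha> x) = x" for x
    using inv permutes_not_in[OF ap, of x] by (cases "x \<in> H") auto
  have phip: "?\<phi> permutes H" by (rule permutes_compose[OF ap sgp])
  have pophi: "perm_on ?\<phi> H"
    unfolding perm_on_def
  proof
    show "bij_betw ?\<phi> H H" using pos unfolding perm_on_def by (blast intro: bij_betw_trans)
    show "\<forall>x. x \<notin> H \<longrightarrow> ?\<phi> x = x" using pos unfolding perm_on_def by simp
  qed
  have trd: "transitive_on H ?\<phi> \<alpha>"
    unfolding transitive_on_def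
  proof (intro ballI)
    fix x y assume "x \<in> H" "y \<in> H"
    let ?R1 = "{(z, \<sigma> z) |z. z \<in> H} \<union> {(z, \<alpha> z) |z. z \<in> H}"
    let ?R2 = "{(z, ?\<phi> z) |z. z \<in> H} \<union> {(z, \<alpha> z) |z. z \<in> H}"
    have "?R1 \<subseteq> ?R2\<^sup>*"
    proof
      fix pr assume "pr \<in> ?R1"
      then obtain z where z: "z \<in> H" "pr = (z, \<sigma> z) \<or> pr = (z, \<alpha> z)" by blast
      have az: "\<alpha> z \<in> H" using permutes_in_image[OF ap] z(1) by simp
      have "(z, \<alpha> z) \<in> ?R2" using z(1) by blast
      moreover have "(\<alpha> z, \<sigma> z) \<in> ?R2" using az aa[of z] by force
      ultimately have "(z, \<sigma> z) \<in> ?R2\<^sup>*" by (meson r_into_rtrancl rtrancl_into_rtrancl)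
      thus "pr \<in> ?R2\<^sup>*" using z(2) \<open>(z, \<alpha> z) \<in> ?R2\<close> by blast
    qed
    hence "?R1\<^sup>* \<subseteq> ?R2\<^sup>*" by (rule rtrancl_subset_rtrancl)
    moreover have "(x, y) \<in> ?R1\<^sup>*" using tr \<open>x \<in> H\<close> \<open>y \<in> H\<close> unfolding transitive_on_def by blast
    ultimately show "(x, y) \<in> ?R2\<^sup>*" by blast
  qed
  have S'a: "\<alpha> ` ?S' \<subseteq> ?S'"
  proof
    fix y assume "y \<in> \<alpha> ` ?S'"
    then obtain x where x: "x \<in> H" "x \<notin> S" "y = \<alpha> x" by blast
    have "y \<in> H" using x permutes_in_image[OF ap] by simp
    moreover have "y \<notin> S" using x S(2) aa[of x] by force
    ultimately show "y \<in> ?S'" by simp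
  qed
  have spd: "spanned H ?\<phi> \<alpha> ?S'"
    unfolding spanned_def is_map_def using fin pophi pos(2) fpf trd S'a by auto
  have tour_eq: "tour ?S' ?\<phi> \<alpha> = tour S \<sigma> \<alpha>"
    unfolding tour_def using aa permutes_not_in[OF ap] by (auto simp: fun_eq_iff)
  have cyM: "ncycles (tour S \<sigma> \<alpha>) H = 1" using covered_iff[OF sp] assms(2) by simp
  have covd: "covered H ?\<phi> \<alpha> ?S'" using covered_iff[OF spd] cyM tour_eq by simp
  have Hne: "H \<noteq> {}" using assms(1) by blast
  have genus_eq: "genus H \<sigma> \<alpha> = genus S (restr \<sigma> S) (restr \<alpha> S)
        + genus ?S' (restr ?\<phi> ?S') (restr \<alpha> ?S')"
  proof (cases "S = {}")
    case True
    have v1: "ncycles \<sigma> H = 1" using assms(2) True unfolding covered_def by simp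
    have "?\<phi> \<circ> \<alpha> = \<sigma>" using aa by (auto simp: fun_eq_iff)
    hence "genus ?S' (restr ?\<phi> ?S') (restr \<alpha> ?S') = genus H \<sigma> \<alpha>"
      unfolding True Diff_empty restr_self[OF phip] restr_self[OF ap] genus_def using Hne v1 by simp
    thus ?thesis using True by (simp add: genus_def)
  next
    case Sne: False
    show ?thesis
    proof (cases "S = H")
      case True
      show ?thesis unfolding True Diff_cancel restr_self[OF sgp] restr_self[OF ap] by (simp add: genus_def)
    next
      case False
      have S'ne: "?S' \<noteq> {}" using False S(1) by blast
      have finS: "finite S" using fin S(1) finite_subset by blast
      have finS': "finite ?S'" using fin by simp
      have one: "ncycles (restr \<sigma> S \<circ> restr \<alpha> S) S = 1" and meet: "\<forall>x\<in>H. cyc \<sigma> x \<inter> S \<noteq> {}"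
        using assms(2) Sne unfolding covered_def by auto
      have one': "ncycles (restr ?\<phi> ?S' \<circ> restr \<alpha> ?S') ?S' = 1" and meet': "\<forall>x\<in>H. cyc ?\<phi> x \<inter> ?S' \<noteq> {}"
        using covd S'ne unfolding covered_def by auto
      have rsp: "restr \<sigma> S permutes S" by (rule restr_permutes[OF sgp fin S(1)])
      have rap: "restr \<alpha> S permutes S" by (rule restr_permutes[OF ap fin S(1)])
      have rpp: "restr ?\<phi> ?S' permutes ?S'" by (rule restr_permutes[OF phip fin]) blast
      have rap': "restr \<alpha> ?S' permutes ?S'" by (rule restr_permutes[OF ap fin]) blast
      have v: "ncycles (restr \<sigma> S) S = ncycles \<sigma> H" by (rule ncycles_restr_all[OF sgp fin S(1) meet])
      have f: "ncycles (restr ?\<phi> ?S') ?S' = ncycles ?\<phi> H" by (rule ncycles_restr_all[OF phip fin _ meet']) blast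
      have e1: "ncycles (restr \<alpha> S) S = ncycles \<alpha> S" by (rule ncycles_restr_stable[OF ap fin S(2)])
      have e2: "ncycles (restr \<alpha> ?S') ?S' = ncycles \<alpha> ?S'" by (rule ncycles_restr_stable[OF ap fin S'a])
      have c1: "card S = 2 * ncycles \<alpha> S" by (rule card_involution[OF ap fin fpf S(1,2)])
      have c2: "card ?S' = 2 * ncycles \<alpha> ?S'" by (rule card_involution[OF ap fin fpf _ S'a]) blast
      have HU: "H = S \<union> ?S'" using S(1) by blast
      have e: "ncycles \<alpha> H = ncycles \<alpha> S + ncycles \<alpha> ?S'"
        by (subst HU, rule ncycles_Un[OF ap finS finS' S(2) S'a]) blast
      have p1: "even (ncycles (restr \<sigma> S \<circ> restr \<alpha> S) S + ncycles (restr \<sigma> S) S + ncycles (restr \<alpha> S) S + card S)"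
        by (rule parity[OF finS rsp rap])
      have p2: "even (ncycles (restr ?\<phi> ?S' \<circ> restr \<alpha> ?S') ?S' + ncycles (restr ?\<phi> ?S') ?S'
                 + ncycles (restr \<alpha> ?S') ?S' + card ?S')"
        by (rule parity[OF finS' rpp rap'])
      define V where "V = ncycles \<sigma> H"
      define F where "F = ncycles ?\<phi> H"
      define A1 where "A1 = ncycles \<alpha> S"
      define A2 where "A2 = ncycles \<alpha> ?S'"
      have q1: "even (1 + V + A1 + 2 * A1)" using p1 unfolding one v e1 c1 V_def A1_def .
      have q2: "even (1 + F + A2 + 2 * A2)" using p2 unfolding one' f e2 c2 F_def A2_def .
      have g1: "genus S (restr \<sigma> S) (restr \<alpha> S) = (2 - int V + int A1 - 1) div 2"
        unfolding genus_def using Sne one v e1 V_def A1_def by simp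
      have g2: "genus ?S' (restr ?\<phi> ?S') (restr \<alpha> ?S') = (2 - int F + int A2 - 1) div 2"
        unfolding genus_def using S'ne one' f e2 F_def A2_def by simp
      have g: "genus H \<sigma> \<alpha> = (2 - int V + int (A1 + A2) - int F) div 2"
        unfolding genus_def using Hne e V_def F_def A1_def A2_def by simp
      have q1': "even (1 + int V + int A1)" using q1 by presburger
      have q2': "even (1 + int F + int A2)" using q2 by presburger
      show ?thesis unfolding g g1 g2 using q1' q2' by presburger
    qed
  qed
  show ?thesis using covd genus_eq by simp
qed


end
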